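(* Let $k$ be a field, let $d_1,\ldots,d_n$ be positive integers, let $m\ge 0$ be an integer, and let $f,h \in k[x_1, \dots ,x_n]$ be such that $h^mf \in (x_1^{d_1}, \ldots, x_n^{d_n})$. Then for every $j\in\{1,\ldots,n\}$, \[h^{m+1}f'_{x_j} \in (x_1^{\bar{d_1}}, \ldots , x_n^{\bar{d_n}}),\] where $\bar{d_j}=d_j-1$ and $\bar{d_i}=d_i$ for all $i \ne j$.
   Context: $f'_{x_j}$ denotes the formal partial derivative of the polynomial $f$ with respect to $x_j$. *)

theory Defs
  imports Main "HOL-Library.Poly_Mapping"
begin

text \<open>Variable x_(i+1) of the paper is represented by index i (0-based).\<close>

type_synonym 'a mpoly = "(nat \<Rightarrow>\<^sub>0 nat) \<Rightarrow>\<^sub>0 'a"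

definition Var :: "nat \<Rightarrow> 'a::comm_ring_1 mpoly" where
  "Var i = Poly_Mapping.single (Poly_Mapping.single i 1) 1"

definition vars :: "'a::zero mpoly \<Rightarrow> nat set" where
  "vars p = (\<Union>m\<in>Poly_Mapping.keys p. Poly_Mapping.keys (m :: nat \<Rightarrow>\<^sub>0 nat))"

definition in_poly_ring :: "nat \<Rightarrow> 'a::zero mpoly \<Rightarrow> bool" where
  "in_poly_ring n p \<longleftrightarrow> vars p \<subseteq> {..<n}"

definition pderiv_mp :: "nat \<Rightarrow> 'a::comm_ring_1 mpoly \<Rightarrow> 'a mpoly" where
  "pderiv_mp j p = (\<Sum>m\<in>Poly_Mapping.keys p.
      Poly_Mapping.single (m - Poly_Mapping.single j 1) (of_nat (Poly_Mapping.lookup m j) * Poly_Mapping.lookup p m))"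

definition in_monomial_ideal :: "nat \<Rightarrow> (nat \<Rightarrow> nat) \<Rightarrow> 'a::comm_ring_1 mpoly \<Rightarrow> bool" where
  "in_monomial_ideal n e p \<longleftrightarrow>
     (\<exists>g. (\<forall>i<n. in_poly_ring n (g i)) \<and> p = (\<Sum>i<n. g i * Var i ^ e i))"

end

theory Submission
  imports Defs
begin

abbreviation "PS \<equiv> Poly_Mapping.single"
abbreviation "PL \<equiv> Poly_Mapping.lookup"
abbreviation "PK \<equiv> Poly_Mapping.keys"

lemma pd_single:
  "pderiv_mp j (PS a c :: 'a::comm_ring_1 mpoly) = PS (a - PS j 1) (of_nat (PL a j) * c)"
  by (cases "c = 0") (simp_all add: pderiv_mp_def)

lemma pd_zero[simp]: "pderiv_mp j (0 :: 'a::comm_ring_1 mpoly) = 0"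
  by (simp add: pderiv_mp_def)

lemma pd_superset:
  assumes "finite S" "PK p \<subseteq> S"
  shows "pderiv_mp j (p :: 'a::comm_ring_1 mpoly) = (\<Sum>m\<in>S. pderiv_mp j (PS m (PL p m)))"
proof -
  have "pderiv_mp j p = (\<Sum>m\<in>PK p. pderiv_mp j (PS m (PL p m)))"
    by (simp add: pderiv_mp_def[of j p] pd_single)
  also have "\<dots> = (\<Sum>m\<in>S. pderiv_mp j (PS m (PL p m)))"
    apply (rule sum.mono_neutral_left[OF assms(1) assms(2)])
    by (simp add: pd_single in_keys_iff)
  finally show ?thesis .
qed

lemma pd_add: "pderiv_mp j (p + q :: 'a::comm_ring_1 mpoly) = pderiv_mp j p + pderiv_mp j q"
proof -
  define S where "S = PK p \<union> PK q"
  have f: "finite S" by (simp add: S_def)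
  have "PK (p+q) \<subseteq> S" unfolding S_def by (rule keys_add)
  then have "pderiv_mp j (p+q) = (\<Sum>m\<in>S. pderiv_mp j (PS m (PL (p+q) m)))"
    by (rule pd_superset[OF f])
  also have "\<dots> = (\<Sum>m\<in>S. pderiv_mp j (PS m (PL p m)) + pderiv_mp j (PS m (PL q m)))"
    unfolding pd_single by (simp add: lookup_add single_add distrib_left)
  also have "\<dots> = pderiv_mp j p + pderiv_mp j q"
    using pd_superset[OF f, of p j] pd_superset[OF f, of q j]
    by (simp only: sum.distrib S_def Un_upper1 Un_upper2)
  finally show ?thesis .
qed

lemma pd_sum: "pderiv_mp j (\<Sum>i\<in>A. f i :: 'a::comm_ring_1 mpoly) = (\<Sum>i\<in>A. pderiv_mp j (f i))"
  by (induction A rule: infinite_finite_induct) (simp_all add: pd_add)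

lemma pd_uminus: "pderiv_mp j (- p :: 'a::comm_ring_1 mpoly) = - pderiv_mp j p"
  by (metis add_eq_0_iff pd_add add.right_inverse pd_zero)

lemma pd_diff: "pderiv_mp j (p - q :: 'a::comm_ring_1 mpoly) = pderiv_mp j p - pderiv_mp j q"
  unfolding diff_conv_add_uminus pd_add pd_uminus ..

lemma expansion: "(p :: 'a::comm_ring_1 mpoly) = (\<Sum>m\<in>PK p. PS m (PL p m))"
proof (rule poly_mapping_eqI)
  fix k
  show "PL p k = PL (\<Sum>m\<in>PK p. PS m (PL p m)) k"
    by (simp add: lookup_sum lookup_single when_def in_keys_iff)
qed

lemma minus_add_swap:
  assumes "PL a j \<noteq> 0"
  shows "a - PS j 1 + b = a + b - PS j (1::nat)"
  by (rule poly_mapping_eqI) (use assms in \<open>auto simp add: lookup_minus lookup_add lookup_single when_def\<close>)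

lemma pd_mult_single:
  "pderiv_mp j (PS a c * PS b d :: 'a::comm_ring_1 mpoly)
   = pderiv_mp j (PS a c) * PS b d + PS a c * pderiv_mp j (PS b d)"
proof -
  have 1: "PS (a - PS j 1 + b) (of_nat (PL a j) * c * d) = PS (a + b - PS j 1) (of_nat (PL a j) * c * d)"
    using minus_add_swap[of a j b] by (cases "PL a j = 0") simp_all
  have 2: "PS (a + (b - PS j 1)) (c * (of_nat (PL b j) * d)) = PS (a + b - PS j 1) (of_nat (PL b j) * c * d)"
    using minus_add_swap[of b j a]
    by (cases "PL b j = 0") (simp_all add: add.commute mult.left_commute mult.assoc)
  show ?thesis
    unfolding mult_single pd_single 1 2
    by (simp add: lookup_add distrib_right single_add[symmetric] mult.assoc)
qed

lemma pd_mult: "pderiv_mp j (p * q :: 'a::comm_ring_1 mpoly) = pderiv_mp j p * q + p * pderiv_mp j q"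
proof -
  let ?sp = "\<lambda>a. PS a (PL p a)" and ?sq = "\<lambda>b. PS b (PL q b)"
  have "p * q = (\<Sum>a\<in>PK p. \<Sum>b\<in>PK q. ?sp a * ?sq b)"
    by (subst expansion[of p], subst expansion[of q]) (simp add: sum_product)
  then have "pderiv_mp j (p*q) = (\<Sum>a\<in>PK p. \<Sum>b\<in>PK q.
       pderiv_mp j (?sp a) * ?sq b + ?sp a * pderiv_mp j (?sq b))"
    by (simp add: pd_sum pd_mult_single)
  also have "\<dots> = (\<Sum>a\<in>PK p. pderiv_mp j (?sp a)) * (\<Sum>b\<in>PK q. ?sq b)
      + (\<Sum>a\<in>PK p. ?sp a) * (\<Sum>b\<in>PK q. pderiv_mp j (?sq b))"
    by (simp add: sum.distrib sum_product)
  also have "\<dots> = pderiv_mp j p * q + p * pderiv_mp j q"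
    using pd_superset[of "PK p" p j] pd_superset[of "PK q" q j] expansion[of p] expansion[of q]
    by simp
  finally show ?thesis .
qed

lemma pd_power: "pderiv_mp j (p ^ Suc e :: 'a::comm_ring_1 mpoly) = of_nat (Suc e) * p ^ e * pderiv_mp j p"
  by (induction e) (simp_all add: pd_mult algebra_simps)

lemma pd_Var: "pderiv_mp j (Var i :: 'a::comm_ring_1 mpoly) = (if i = j then 1 else 0)"
  by (simp add: Var_def pd_single lookup_single when_def)

lemma pd_of_nat: "pderiv_mp j (of_nat k :: 'a::comm_ring_1 mpoly) = 0"
  by (metis single_of_nat pd_single lookup_zero mult_zero_left of_nat_0 single_zero)


lemma ipr_iff: "in_poly_ring n p \<longleftrightarrow> (\<forall>m\<in>PK p. PK m \<subseteq> {..<n})"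
  by (auto simp: in_poly_ring_def vars_def)

lemma ipr_add: "in_poly_ring n p \<Longrightarrow> in_poly_ring n q \<Longrightarrow> in_poly_ring n (p + q)"
  unfolding ipr_iff using keys_add[of p q] by (meson UnE subsetD)

lemma ipr_uminus: "in_poly_ring n (p::'a::comm_ring_1 mpoly) \<Longrightarrow> in_poly_ring n (- p)"
  unfolding ipr_iff by simp

lemma ipr_diff: "in_poly_ring n (p::'a::comm_ring_1 mpoly) \<Longrightarrow> in_poly_ring n q \<Longrightarrow> in_poly_ring n (p - q)"
  unfolding diff_conv_add_uminus by (intro ipr_add ipr_uminus)

lemma ipr_zero: "in_poly_ring n 0"
  unfolding ipr_iff by simp

lemma ipr_mult: "in_poly_ring n (p::'a::comm_ring_1 mpoly) \<Longrightarrow> in_poly_ring n q \<Longrightarrow> in_poly_ring n (p * q)"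
  unfolding ipr_iff
proof
  fix m assume p: "\<forall>m\<in>PK p. PK m \<subseteq> {..<n}" and q: "\<forall>m\<in>PK q. PK m \<subseteq> {..<n}" and m: "m \<in> PK (p*q)"
  then obtain a b where "m = a + b" "a \<in> PK p" "b \<in> PK q" using keys_mult by blast
  then show "PK m \<subseteq> {..<n}" using p q keys_add[of a b] by blast
qed

lemma ipr_one: "in_poly_ring n (1::'a::comm_ring_1 mpoly)"
  unfolding ipr_iff by simp

lemma ipr_of_nat: "in_poly_ring n (of_nat k::'a::comm_ring_1 mpoly)"
  unfolding ipr_iff by (metis empty_iff insert_iff keys_single keys_zero single_of_nat subset_iff)

lemma ipr_Var: "i < n \<Longrightarrow> in_poly_ring n (Var i::'a::comm_ring_1 mpoly)"
  unfolding ipr_iff Var_def by simp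

lemma ipr_power: "in_poly_ring n (p::'a::comm_ring_1 mpoly) \<Longrightarrow> in_poly_ring n (p ^ k)"
  by (induction k) (simp_all add: ipr_one ipr_mult)

lemma ipr_pd: "in_poly_ring n (p::'a::comm_ring_1 mpoly) \<Longrightarrow> in_poly_ring n (pderiv_mp j p)"
  unfolding ipr_iff
proof
  fix m assume p: "\<forall>m\<in>PK p. PK m \<subseteq> {..<n}" and m: "m \<in> PK (pderiv_mp j p)"
  then obtain a where a: "a \<in> PK p" "m \<in> PK (PS (a - PS j 1) (of_nat (PL a j) * PL p a))"
    using m keys_sum[of "\<lambda>a. PS (a - PS j 1) (of_nat (PL a j) * PL p a)" "PK p"]
    unfolding pderiv_mp_def by (meson UN_E subsetD)
  then have "m = a - PS j 1" by (simp split: if_splits)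
  moreover have "PK (a - PS j 1) \<subseteq> PK a"
    by (auto simp: in_keys_iff lookup_minus)
  ultimately show "PK m \<subseteq> {..<n}" using p a by blast
qed

lemma pd_one: "pderiv_mp j (1 :: 'a::comm_ring_1 mpoly) = 0"
  using pd_of_nat[of j 1] by simp

theorem lemma2p1:
  fixes f h :: "'k::field mpoly" and d :: "nat \<Rightarrow> nat" and n m j :: nat
  assumes "\<forall>i<n. d i > 0"
    and "in_poly_ring n f" and "in_poly_ring n h"
    and "in_monomial_ideal n d (h ^ m * f)"
    and "j < n"
  shows "in_monomial_ideal n (d(j := d j - 1)) (h ^ (m + 1) * pderiv_mp j f)"
proof -
  obtain g where g: "\<forall>i<n. in_poly_ring n (g i)" and eq: "h^m * f = (\<Sum>i<n. g i * Var i ^ d i)"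
    using assms(4) unfolding in_monomial_ideal_def by blast
  define D where "D = (pderiv_mp j :: 'k mpoly \<Rightarrow> 'k mpoly)"
  define e where "e = d(j := d j - 1)"
  define G where "G i = (h * D (g i) - of_nat m * D h * g i) * (if i = j then Var j else 1)
     + (if i = j then h * g i * of_nat (d i) else 0)" for i
  have hDhm: "h * D (h^m) = of_nat m * h^m * D h"
  proof (cases m)
    case 0 then show ?thesis by (simp add: D_def pd_one)
  next
    case (Suc k) then show ?thesis unfolding Suc D_def pd_power by (simp add: algebra_simps)
  qed
  have key: "h * D (h^m * f) = of_nat m * D h * (h^m * f) + h^(m+1) * D f"
    using hDhm by (simp add: D_def pd_mult algebra_simps)
  have "h^(m+1) * D f = h * D (h^m * f) - of_nat m * D h * (h^m * f)"
    using key by simp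
  also have "\<dots> = (\<Sum>i<n. h * (D (g i) * Var i ^ d i + g i * D (Var i ^ d i)) - of_nat m * D h * (g i * Var i ^ d i))"
    unfolding eq by (simp add: D_def pd_sum pd_mult sum_distrib_left sum_subtractf)
  also have "\<dots> = (\<Sum>i<n. G i * Var i ^ e i)"
  proof (rule sum.cong[OF refl])
    fix i assume "i \<in> {..<n}"
    then obtain k where k: "d i = Suc k" using assms(1) gr0_implies_Suc by blast
    have DX: "D (Var i ^ d i) = (if i = j then of_nat (d i) * Var i ^ k else 0)"
      unfolding k D_def pd_power pd_Var by simp
    show "h * (D (g i) * Var i ^ d i + g i * D (Var i ^ d i)) - of_nat m * D h * (g i * Var i ^ d i) = G i * Var i ^ e i"
    proof (cases "i = j")
      case True
      then have "e i = k" using k by (simp add: e_def)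
      then show ?thesis using True DX unfolding G_def k by (simp add: algebra_simps)
    next
      case False
      then show ?thesis using DX unfolding G_def e_def by (simp add: algebra_simps)
    qed
  qed
  finally have "h^(m+1) * pderiv_mp j f = (\<Sum>i<n. G i * Var i ^ e i)" by (simp add: D_def)
  moreover have "\<forall>i<n. in_poly_ring n (G i)"
  proof (intro allI impI)
    fix i assume i: "i < n"
    have gi: "in_poly_ring n (g i)" using g i by blast
    have a: "in_poly_ring n (h * D (g i) - of_nat m * D h * g i)"
      unfolding D_def
      by (intro ipr_diff ipr_mult ipr_of_nat ipr_pd gi assms(3))
    have b: "in_poly_ring n (if i = j then Var j else 1 :: 'k mpoly)"
      by (simp add: ipr_Var[OF assms(5)] ipr_one)
    have c: "in_poly_ring n (if i = j then h * g i * of_nat (d i) else 0)"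
      using ipr_mult[OF ipr_mult[OF assms(3) gi] ipr_of_nat, of "d i"] by (auto intro: ipr_zero)
    show "in_poly_ring n (G i)" unfolding G_def by (intro ipr_add ipr_mult a b c)
  qed
  ultimately show ?thesis unfolding in_monomial_ideal_def e_def by blast
qed

end
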